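(* Let $\Omega,\Omega^*$ be compact metric spaces, $c\in C(\Omega\times\Omega^* )$, and $\nu$ a Borel probability measure on $\Omega^*$. Define $K_0\colon C(\Omega)\to\mathbb R$ by $K_0(\phi)=\int_{\Omega^*}\phi^c\,d\nu$. Then $K_0$ is submodular, convex, and $1$-Lipschitz with respect to the supremum norm.
   Context: For $\phi\in C(\Omega)$, the $c$-transform is $\phi^c(y)=\sup_{x\in\Omega}\phi(x)-c(x,y)$ for $y\in\Omega^*$. Submodular means $K_0(\phi_1\wedge\phi_2)+K_0(\phi_1\vee\phi_2)\leq K_0(\phi_1)+K_0(\phi_2)$ for all $\phi_1,\phi_2\in C(\Omega)$, with $\wedge,\vee$ the pointwise min and max. *)

theory Defs
  imports "HOL-Analysis.Analysis" "HOL-Probability.Probability"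
begin

definition c_transform :: "('a \<Rightarrow> 'b \<Rightarrow> real) \<Rightarrow> 'a set \<Rightarrow> ('a \<Rightarrow> real) \<Rightarrow> 'b \<Rightarrow> real" where
  "c_transform c \<Omega> \<phi> y = (SUP x\<in>\<Omega>. \<phi> x - c x y)"

definition K0 :: "('a \<Rightarrow> 'b \<Rightarrow> real) \<Rightarrow> 'a set \<Rightarrow> 'b measure \<Rightarrow> ('a \<Rightarrow> real) \<Rightarrow> real" where
  "K0 c \<Omega> \<nu> \<phi> = integral\<^sup>L \<nu> (c_transform c \<Omega> \<phi>)"

definition sup_norm_on :: "'a set \<Rightarrow> ('a \<Rightarrow> real) \<Rightarrow> real" where
  "sup_norm_on \<Omega> f = (SUP x\<in>\<Omega>. \<bar>f x\<bar>)"

end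

theory Submission
  imports Defs
begin

lemma ct_bdd:
  fixes \<Omega> :: "'a::metric_space set" and \<Omega>s :: "'b::metric_space set" and c :: "'a \<Rightarrow> 'b \<Rightarrow> real"
  assumes "compact \<Omega>" "continuous_on \<Omega> \<phi>" "continuous_on (\<Omega> \<times> \<Omega>s) (\<lambda>(x, y). c x y)" "y \<in> \<Omega>s"
  shows "bdd_above ((\<lambda>x. \<phi> x - c x y) ` \<Omega>)"
proof -
  have "continuous_on \<Omega> (\<lambda>x. c x y)"
  proof -
    have "continuous_on \<Omega> (\<lambda>x. (x, y))" by (intro continuous_intros)
    moreover have "(\<lambda>x. (x, y)) ` \<Omega> \<subseteq> \<Omega> \<times> \<Omega>s" using assms(4) by auto
    ultimately show ?thesis using continuous_on_compose2[OF assms(3), of \<Omega> "\<lambda>x. (x, y)"] by simp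
  qed
  then have "continuous_on \<Omega> (\<lambda>x. \<phi> x - c x y)" using assms(2) by (simp add: continuous_on_diff)
  then show ?thesis using assms(1)
    by (intro bounded_imp_bdd_above compact_imp_bounded compact_continuous_image)
qed

lemma ct_upper:
  fixes \<Omega> :: "'a::metric_space set" and \<Omega>s :: "'b::metric_space set" and c :: "'a \<Rightarrow> 'b \<Rightarrow> real"
  assumes "compact \<Omega>" "continuous_on \<Omega> \<phi>" "continuous_on (\<Omega> \<times> \<Omega>s) (\<lambda>(x, y). c x y)" "y \<in> \<Omega>s" "x \<in> \<Omega>"
  shows "\<phi> x - c x y \<le> c_transform c \<Omega> \<phi> y"
  unfolding c_transform_def using ct_bdd[OF assms(1-4)] assms(5) by (rule cSUP_upper2) auto

lemma ct_least:
  assumes "\<Omega> \<noteq> {}" "\<And>x. x \<in> \<Omega> \<Longrightarrow> \<phi> x - c x y \<le> B"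
  shows "c_transform c \<Omega> \<phi> y \<le> B"
  unfolding c_transform_def using assms by (intro cSUP_least) auto

lemma ct_cont:
  fixes \<Omega> :: "'a::metric_space set" and \<Omega>s :: "'b::metric_space set" and c :: "'a \<Rightarrow> 'b \<Rightarrow> real"
  assumes "compact \<Omega>" "\<Omega> \<noteq> {}" "compact \<Omega>s" "continuous_on \<Omega> \<phi>" "continuous_on (\<Omega> \<times> \<Omega>s) (\<lambda>(x, y). c x y)"
  shows "continuous_on \<Omega>s (c_transform c \<Omega> \<phi>)"
proof -
  have uc: "uniformly_continuous_on (\<Omega> \<times> \<Omega>s) (\<lambda>(x, y). c x y)"
    using assms by (intro compact_uniformly_continuous compact_Times) auto
  show ?thesis unfolding continuous_on_iff
  proof (intro ballI allI impI)
    fix y e assume y: "y \<in> \<Omega>s" and e: "(0::real) < e"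
    obtain d where d: "d > 0" and hd: "\<And>p p'. p \<in> \<Omega> \<times> \<Omega>s \<Longrightarrow> p' \<in> \<Omega> \<times> \<Omega>s \<Longrightarrow> dist p' p < d \<Longrightarrow>
       dist ((\<lambda>(x, y). c x y) p') ((\<lambda>(x, y). c x y) p) < e/2"
      using uc e unfolding uniformly_continuous_on_def by (meson half_gt_zero)
    show "\<exists>d>0. \<forall>y'\<in>\<Omega>s. dist y' y < d \<longrightarrow> dist (c_transform c \<Omega> \<phi> y') (c_transform c \<Omega> \<phi> y) < e"
    proof (intro exI[of _ d] conjI ballI impI d)
      fix y' assume y': "y' \<in> \<Omega>s" and dy: "dist y' y < d"
      have cc: "\<bar>c x y' - c x y\<bar> < e/2" if x: "x \<in> \<Omega>" for x
      proof -
        have "dist (x, y') (x, y) = dist y' y" by (simp add: dist_Pair_Pair)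
        then have "dist (c x y') (c x y) < e/2" using hd[of "(x,y)" "(x,y')"] x y y' dy by auto
        then show ?thesis by (simp add: dist_real_def)
      qed
      have "c_transform c \<Omega> \<phi> y' \<le> c_transform c \<Omega> \<phi> y + e/2"
      proof (rule ct_least[OF assms(2)])
        fix x assume x: "x \<in> \<Omega>"
        have "\<phi> x - c x y \<le> c_transform c \<Omega> \<phi> y" by (rule ct_upper[OF assms(1,4,5) y x])
        then show "\<phi> x - c x y' \<le> c_transform c \<Omega> \<phi> y + e/2" using cc[OF x] by linarith
      qed
      moreover have "c_transform c \<Omega> \<phi> y \<le> c_transform c \<Omega> \<phi> y' + e/2"
      proof (rule ct_least[OF assms(2)])
        fix x assume x: "x \<in> \<Omega>"
        have "\<phi> x - c x y' \<le> c_transform c \<Omega> \<phi> y'" by (rule ct_upper[OF assms(1,4,5) y' x])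
        then show "\<phi> x - c x y \<le> c_transform c \<Omega> \<phi> y' + e/2" using cc[OF x] by linarith
      qed
      ultimately show "dist (c_transform c \<Omega> \<phi> y') (c_transform c \<Omega> \<phi> y) < e"
        using e by (simp add: dist_real_def abs_le_iff)
    qed
  qed
qed

lemma ct_int:
  fixes \<Omega> :: "'a::metric_space set" and \<Omega>s :: "'b::metric_space set" and c :: "'a \<Rightarrow> 'b \<Rightarrow> real"
  assumes "compact \<Omega>" "\<Omega> \<noteq> {}" "compact \<Omega>s" "continuous_on \<Omega> \<phi>" "continuous_on (\<Omega> \<times> \<Omega>s) (\<lambda>(x, y). c x y)"
    and "prob_space \<nu>" and "sets \<nu> = sets (restrict_space borel \<Omega>s)"
  shows "integrable \<nu> (c_transform c \<Omega> \<phi>)"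
proof -
  interpret prob_space \<nu> by fact
  have sp: "space \<nu> = \<Omega>s" using sets_eq_imp_space_eq[OF assms(7)] by (simp add: space_restrict_space)
  have ct: "continuous_on \<Omega>s (c_transform c \<Omega> \<phi>)" by (rule ct_cont[OF assms(1-5)])
  then have "bounded (c_transform c \<Omega> \<phi> ` \<Omega>s)"
    using assms(3) by (intro compact_imp_bounded compact_continuous_image)
  then obtain B where B: "\<And>y. y \<in> \<Omega>s \<Longrightarrow> norm (c_transform c \<Omega> \<phi> y) \<le> B"
    unfolding bounded_iff by auto
  have m: "c_transform c \<Omega> \<phi> \<in> borel_measurable \<nu>"
    using borel_measurable_continuous_on_restrict[OF ct] by (simp add: measurable_cong_sets[OF assms(7) refl])
  show ?thesis
    by (rule integrable_const_bound[where B=B]) (use B sp m in auto)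
qed

theorem lemma3p9:
  fixes \<Omega> :: "'a::metric_space set" and \<Omega>s :: "'b::metric_space set"
    and c :: "'a \<Rightarrow> 'b \<Rightarrow> real" and \<nu> :: "'b measure"
  assumes "compact \<Omega>" and "\<Omega> \<noteq> {}" and "compact \<Omega>s"
    and "continuous_on (\<Omega> \<times> \<Omega>s) (\<lambda>(x, y). c x y)"
    and "prob_space \<nu>" and "sets \<nu> = sets (restrict_space borel \<Omega>s)"
  shows "(\<forall>\<phi>1 \<phi>2. continuous_on \<Omega> \<phi>1 \<longrightarrow> continuous_on \<Omega> \<phi>2 \<longrightarrow>
            K0 c \<Omega> \<nu> (\<lambda>x. min (\<phi>1 x) (\<phi>2 x)) + K0 c \<Omega> \<nu> (\<lambda>x. max (\<phi>1 x) (\<phi>2 x))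
              \<le> K0 c \<Omega> \<nu> \<phi>1 + K0 c \<Omega> \<nu> \<phi>2)
       \<and> (\<forall>\<phi>1 \<phi>2 t. continuous_on \<Omega> \<phi>1 \<longrightarrow> continuous_on \<Omega> \<phi>2 \<longrightarrow> 0 \<le> t \<longrightarrow> t \<le> 1 \<longrightarrow>
            K0 c \<Omega> \<nu> (\<lambda>x. t * \<phi>1 x + (1 - t) * \<phi>2 x)
              \<le> t * K0 c \<Omega> \<nu> \<phi>1 + (1 - t) * K0 c \<Omega> \<nu> \<phi>2)
       \<and> (\<forall>\<phi>1 \<phi>2. continuous_on \<Omega> \<phi>1 \<longrightarrow> continuous_on \<Omega> \<phi>2 \<longrightarrow>
            \<bar>K0 c \<Omega> \<nu> \<phi>1 - K0 c \<Omega> \<nu> \<phi>2\<bar> \<le> sup_norm_on \<Omega> (\<lambda>x. \<phi>1 x - \<phi>2 x))"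
proof -
  interpret P: prob_space \<nu> by fact
  have sp: "space \<nu> = \<Omega>s" using sets_eq_imp_space_eq[OF assms(6)] by (simp add: space_restrict_space)
  have I: "integrable \<nu> (c_transform c \<Omega> \<phi>)" if "continuous_on \<Omega> \<phi>" for \<phi>
    by (rule ct_int[OF assms(1-3) that assms(4-6)])
  have U: "\<phi> x - c x y \<le> c_transform c \<Omega> \<phi> y" if "continuous_on \<Omega> \<phi>" "y \<in> \<Omega>s" "x \<in> \<Omega>" for \<phi> x y
    by (rule ct_upper[OF assms(1) that(1) assms(4) that(2,3)])
  note L = ct_least[OF assms(2)]
  have part1: "K0 c \<Omega> \<nu> (\<lambda>x. min (\<phi>1 x) (\<phi>2 x)) + K0 c \<Omega> \<nu> (\<lambda>x. max (\<phi>1 x) (\<phi>2 x))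
              \<le> K0 c \<Omega> \<nu> \<phi>1 + K0 c \<Omega> \<nu> \<phi>2"
    if c1: "continuous_on \<Omega> \<phi>1" and c2: "continuous_on \<Omega> \<phi>2" for \<phi>1 \<phi>2
  proof -
    have cmin: "continuous_on \<Omega> (\<lambda>x. min (\<phi>1 x) (\<phi>2 x))" using c1 c2 by (intro continuous_intros)
    have cmax: "continuous_on \<Omega> (\<lambda>x. max (\<phi>1 x) (\<phi>2 x))" using c1 c2 by (intro continuous_intros)
    have pw: "c_transform c \<Omega> (\<lambda>x. min (\<phi>1 x) (\<phi>2 x)) y + c_transform c \<Omega> (\<lambda>x. max (\<phi>1 x) (\<phi>2 x)) y
       \<le> c_transform c \<Omega> \<phi>1 y + c_transform c \<Omega> \<phi>2 y" if y: "y \<in> \<Omega>s" for y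
    proof -
      have a: "c_transform c \<Omega> (\<lambda>x. max (\<phi>1 x) (\<phi>2 x)) y \<le> max (c_transform c \<Omega> \<phi>1 y) (c_transform c \<Omega> \<phi>2 y)"
      proof (rule L)
        fix x assume x: "x \<in> \<Omega>"
        show "max (\<phi>1 x) (\<phi>2 x) - c x y \<le> max (c_transform c \<Omega> \<phi>1 y) (c_transform c \<Omega> \<phi>2 y)"
          using U[OF c1 y x] U[OF c2 y x] by linarith
      qed
      have b1: "c_transform c \<Omega> (\<lambda>x. min (\<phi>1 x) (\<phi>2 x)) y \<le> c_transform c \<Omega> \<phi>1 y"
      proof (rule L)
        fix x assume x: "x \<in> \<Omega>"
        show "min (\<phi>1 x) (\<phi>2 x) - c x y \<le> c_transform c \<Omega> \<phi>1 y"
          using U[OF c1 y x] by linarith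
      qed
      have b2: "c_transform c \<Omega> (\<lambda>x. min (\<phi>1 x) (\<phi>2 x)) y \<le> c_transform c \<Omega> \<phi>2 y"
      proof (rule L)
        fix x assume x: "x \<in> \<Omega>"
        show "min (\<phi>1 x) (\<phi>2 x) - c x y \<le> c_transform c \<Omega> \<phi>2 y"
          using U[OF c2 y x] by linarith
      qed
      show ?thesis using a b1 b2 by linarith
    qed
    have "K0 c \<Omega> \<nu> (\<lambda>x. min (\<phi>1 x) (\<phi>2 x)) + K0 c \<Omega> \<nu> (\<lambda>x. max (\<phi>1 x) (\<phi>2 x))
       = integral\<^sup>L \<nu> (\<lambda>y. c_transform c \<Omega> (\<lambda>x. min (\<phi>1 x) (\<phi>2 x)) y + c_transform c \<Omega> (\<lambda>x. max (\<phi>1 x) (\<phi>2 x)) y)"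
      unfolding K0_def using I[OF cmin] I[OF cmax] by (simp add: integral_add)
    also have "\<dots> \<le> integral\<^sup>L \<nu> (\<lambda>y. c_transform c \<Omega> \<phi>1 y + c_transform c \<Omega> \<phi>2 y)"
      by (rule integral_mono) (use pw sp I cmin cmax c1 c2 in auto)
    also have "\<dots> = K0 c \<Omega> \<nu> \<phi>1 + K0 c \<Omega> \<nu> \<phi>2"
      unfolding K0_def using I[OF c1] I[OF c2] by (simp add: integral_add)
    finally show ?thesis .
  qed
  have part2: "K0 c \<Omega> \<nu> (\<lambda>x. t * \<phi>1 x + (1 - t) * \<phi>2 x)
              \<le> t * K0 c \<Omega> \<nu> \<phi>1 + (1 - t) * K0 c \<Omega> \<nu> \<phi>2"
    if c1: "continuous_on \<Omega> \<phi>1" and c2: "continuous_on \<Omega> \<phi>2" and t: "0 \<le> t" "t \<le> 1" for \<phi>1 \<phi>2 t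
  proof -
    have cc: "continuous_on \<Omega> (\<lambda>x. t * \<phi>1 x + (1 - t) * \<phi>2 x)" using c1 c2 by (intro continuous_intros)
    have pw: "c_transform c \<Omega> (\<lambda>x. t * \<phi>1 x + (1 - t) * \<phi>2 x) y
       \<le> t * c_transform c \<Omega> \<phi>1 y + (1 - t) * c_transform c \<Omega> \<phi>2 y" if y: "y \<in> \<Omega>s" for y
    proof (rule L)
      fix x assume x: "x \<in> \<Omega>"
      have "t * (\<phi>1 x - c x y) \<le> t * c_transform c \<Omega> \<phi>1 y" using U[OF c1 y x] t by (intro mult_left_mono) auto
      moreover have "(1 - t) * (\<phi>2 x - c x y) \<le> (1 - t) * c_transform c \<Omega> \<phi>2 y" using U[OF c2 y x] t by (intro mult_left_mono) auto
      ultimately show "t * \<phi>1 x + (1 - t) * \<phi>2 x - c x y \<le> t * c_transform c \<Omega> \<phi>1 y + (1 - t) * c_transform c \<Omega> \<phi>2 y"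
        by (simp add: algebra_simps)
    qed
    have "K0 c \<Omega> \<nu> (\<lambda>x. t * \<phi>1 x + (1 - t) * \<phi>2 x) \<le> integral\<^sup>L \<nu> (\<lambda>y. t * c_transform c \<Omega> \<phi>1 y + (1 - t) * c_transform c \<Omega> \<phi>2 y)"
      unfolding K0_def by (rule integral_mono) (use pw sp I cc c1 c2 in auto)
    also have "\<dots> = t * K0 c \<Omega> \<nu> \<phi>1 + (1 - t) * K0 c \<Omega> \<nu> \<phi>2"
      unfolding K0_def using I[OF c1] I[OF c2] by simp
    finally show ?thesis .
  qed
  have half3: "K0 c \<Omega> \<nu> \<phi>1 \<le> K0 c \<Omega> \<nu> \<phi>2 + sup_norm_on \<Omega> (\<lambda>x. \<phi>1 x - \<phi>2 x)"
    if c1: "continuous_on \<Omega> \<phi>1" and c2: "continuous_on \<Omega> \<phi>2" for \<phi>1 \<phi>2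
  proof -
    define S where "S = sup_norm_on \<Omega> (\<lambda>x. \<phi>1 x - \<phi>2 x)"
    have "continuous_on \<Omega> (\<lambda>x. \<bar>\<phi>1 x - \<phi>2 x\<bar>)" using c1 c2 by (intro continuous_intros)
    then have bd: "bdd_above ((\<lambda>x. \<bar>\<phi>1 x - \<phi>2 x\<bar>) ` \<Omega>)"
      using assms(1) by (intro bounded_imp_bdd_above compact_imp_bounded compact_continuous_image)
    have Sx: "\<bar>\<phi>1 x - \<phi>2 x\<bar> \<le> S" if "x \<in> \<Omega>" for x
      unfolding S_def sup_norm_on_def using bd that by (rule cSUP_upper2) auto
    have pw: "c_transform c \<Omega> \<phi>1 y \<le> c_transform c \<Omega> \<phi>2 y + S" if y: "y \<in> \<Omega>s" for y
    proof (rule L)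
      fix x assume x: "x \<in> \<Omega>"
      show "\<phi>1 x - c x y \<le> c_transform c \<Omega> \<phi>2 y + S" using U[OF c2 y x] Sx[OF x] by linarith
    qed
    have "K0 c \<Omega> \<nu> \<phi>1 \<le> integral\<^sup>L \<nu> (\<lambda>y. c_transform c \<Omega> \<phi>2 y + S)"
      unfolding K0_def by (rule integral_mono) (use pw sp I c1 c2 in auto)
    also have "\<dots> = K0 c \<Omega> \<nu> \<phi>2 + S"
      unfolding K0_def using I[OF c2] by (simp add: P.prob_space)
    finally show ?thesis unfolding S_def .
  qed
  have part3: "\<bar>K0 c \<Omega> \<nu> \<phi>1 - K0 c \<Omega> \<nu> \<phi>2\<bar> \<le> sup_norm_on \<Omega> (\<lambda>x. \<phi>1 x - \<phi>2 x)"
    if c1: "continuous_on \<Omega> \<phi>1" and c2: "continuous_on \<Omega> \<phi>2" for \<phi>1 \<phi>2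
  proof -
    have "sup_norm_on \<Omega> (\<lambda>x. \<phi>2 x - \<phi>1 x) = sup_norm_on \<Omega> (\<lambda>x. \<phi>1 x - \<phi>2 x)"
      unfolding sup_norm_on_def by (simp add: abs_minus_commute)
    then show ?thesis using half3[OF c1 c2] half3[OF c2 c1] by linarith
  qed
  show ?thesis using part1 part2 part3 by blast
qed

end
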